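(* Let $K\ge 1$, let $a_1,\dots,a_K\ge 0$ with $\sum_{k=1}^K a_k=1$, and let $0<\lambda<\frac{1}{K}$. For each fixed $\delta>0$ let $z^{\delta}\in\mathbb{R}^K_+$ be a solution (global minimizer) of $$\min_{z\in\mathbb{R}^K}\; -\sum_{k=1}^K a_k\log(z_k)+\lambda\sum_{k=1}^K\log(\delta+z_k)\quad\text{subject to } z\ge 0,\ \sum_{k=1}^K z_k=1.$$ Then $\lim_{\delta\to 0} z^{\delta}=z^0$, where $$z^0_k:=\frac{(a_k-\lambda)_+}{\sum_{j=1}^K (a_j-\lambda)_+}\quad\text{for each }k\in\{1,\dots,K\}.$$
   Context: $(t)_+=\max(t,0)$. The inequality $z\ge 0$ is entrywise. *)

theory Defs
  imports "HOL-Analysis.Analysis"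
begin

definition simplex_feasible :: "real ^ 'k \<Rightarrow> bool" where
  "simplex_feasible z \<longleftrightarrow> (\<forall>k. z $ k \<ge> 0) \<and> (\<Sum>k\<in>UNIV. z $ k) = 1"

text \<open>The objective has finite value exactly when z_k > 0 whenever a_k > 0
  (convention 0 * log 0 = 0); otherwise it is +infinity.\<close>
definition finite_obj :: "real ^ 'k \<Rightarrow> real ^ 'k \<Rightarrow> bool" where
  "finite_obj a z \<longleftrightarrow> (\<forall>k. a $ k > 0 \<longrightarrow> z $ k > 0)"

definition obj :: "real ^ 'k \<Rightarrow> real \<Rightarrow> real \<Rightarrow> real ^ 'k \<Rightarrow> real" where
  "obj a lam \<delta> z = - (\<Sum>k\<in>UNIV. a $ k * ln (z $ k)) + lam * (\<Sum>k\<in>UNIV. ln (\<delta> + z $ k))"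

text \<open>Global minimizer of the (extended-real valued) problem; since a is a feasible point
  with finite objective, a minimizer must have finite objective.\<close>
definition is_minimizer :: "real ^ 'k \<Rightarrow> real \<Rightarrow> real \<Rightarrow> real ^ 'k \<Rightarrow> bool" where
  "is_minimizer a lam \<delta> z \<longleftrightarrow> simplex_feasible z \<and> finite_obj a z \<and>
     (\<forall>w. simplex_feasible w \<and> finite_obj a w \<longrightarrow> obj a lam \<delta> z \<le> obj a lam \<delta> w)"

definition pos_part :: "real \<Rightarrow> real" where
  "pos_part t = max t 0"

end

theory Submission
  imports Defs
begin

lemma kkt:
  fixes a z :: "real ^ 'k"
  assumes min: "is_minimizer a lam \<delta> z" and dpos: "\<delta> > 0" and zi: "z$i > 0" and zj: "z$j > 0"
  shows "a$i/z$i - lam/(\<delta>+z$i) = a$j/z$j - lam/(\<delta>+z$j)"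
proof (cases "i = j")
  case True then show ?thesis by simp
next
  case ij: False
  define G where "G k s = -(a$k * ln s) + lam * ln (\<delta> + s)" for k s
  define w where "w t = (\<chi> k. if k = i then z$i - t else if k = j then z$j + t else z$k)" for t
  define \<phi> where "\<phi> t = G i (z$i - t) + G j (z$j + t)" for t
  have objG: "obj a lam \<delta> v = (\<Sum>k\<in>UNIV. G k (v$k))" for v
    unfolding obj_def G_def by (simp add: sum_subtractf sum_negf sum_distrib_left)
  have wdec: "G k (w t $ k) = G k (z$k) + (if k = i then G i (z$i - t) - G i (z$i) else 0)
     + (if k = j then G j (z$j + t) - G j (z$j) else 0)" for k t
    using ij by (auto simp: w_def)
  have objw: "obj a lam \<delta> (w t) = obj a lam \<delta> z + (\<phi> t - \<phi> 0)" for t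
    unfolding objG wdec \<phi>_def by (simp add: sum.distrib)
  have wsum: "w t $ k = z$k + (if k = i then - t else 0) + (if k = j then t else 0)" for k t
    using ij by (auto simp: w_def)
  have feas: "simplex_feasible z" "finite_obj a z" and le: "\<And>v. simplex_feasible v \<and> finite_obj a v \<Longrightarrow> obj a lam \<delta> z \<le> obj a lam \<delta> v"
    using min unfolding is_minimizer_def by auto
  define d where "d = min (z$i) (z$j)"
  have dp: "d > 0" using zi zj by (simp add: d_def)
  have loc: "\<forall>y. \<bar>0 - y\<bar> < d \<longrightarrow> \<phi> 0 \<le> \<phi> y"
  proof (intro allI impI)
    fix t assume t: "\<bar>0 - t\<bar> < d"
    have ti: "z$i - t > 0" and tj: "z$j + t > 0" using t by (auto simp: d_def)
    have "(\<Sum>k\<in>UNIV. w t $ k) = 1"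
      using feas(1) unfolding simplex_feasible_def wsum by (simp add: sum.distrib)
    then have "simplex_feasible (w t)"
      using feas(1) ti tj unfolding simplex_feasible_def
      by (auto simp: w_def)
    moreover have "finite_obj a (w t)"
      using feas(2) ti tj unfolding finite_obj_def by (auto simp: w_def)
    ultimately have "obj a lam \<delta> z \<le> obj a lam \<delta> (w t)" using le by blast
    then show "\<phi> 0 \<le> \<phi> t" using objw[of t] by simp
  qed
  have der: "DERIV \<phi> 0 :> (-(-(a$i * (1 / z$i)) + lam * (1 / (\<delta> + z$i)))
              + (-(a$j * (1 / z$j)) + lam * (1 / (\<delta> + z$j))))"
    unfolding \<phi>_def G_def using zi zj dpos
    apply (intro derivative_eq_intros)
    apply (auto simp: add_pos_pos)
    done
  have "(-(-(a$i * (1 / z$i)) + lam * (1 / (\<delta> + z$i)))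
              + (-(a$j * (1 / z$j)) + lam * (1 / (\<delta> + z$j)))) = 0"
    by (rule DERIV_local_min[OF der dp loc])
  then show ?thesis by (simp add: divide_inverse)
qed

lemma step:
  fixes a z :: "real ^ 'k"
  assumes a0: "\<forall>k. a $ k \<ge> 0" and sa: "(\<Sum>k\<in>UNIV. a $ k) = 1" and lp: "0 < lam"
    and min: "is_minimizer a lam \<delta> z" and dpos: "\<delta> > 0"
  shows "\<forall>k. (1 - lam * (\<Sum>k\<in>UNIV. z$k/(\<delta>+z$k))) * z$k = a$k - lam*z$k/(\<delta>+z$k)"
    and "1 - lam * real CARD('k) \<le> 1 - lam * (\<Sum>k\<in>UNIV. z$k/(\<delta>+z$k))"
    and "1 - lam * (\<Sum>k\<in>UNIV. z$k/(\<delta>+z$k)) \<le> 1"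
    and "\<forall>k. z$k \<ge> 0"
proof -
  have feas: "\<forall>k. z$k \<ge> 0" "(\<Sum>k\<in>UNIV. z $ k) = 1" "finite_obj a z"
    using min unfolding is_minimizer_def simplex_feasible_def by auto
  obtain i0 where i0: "z$i0 > 0"
  proof (rule ccontr)
    assume "\<not> thesis"
    then have "\<forall>k. z$k = 0" using feas(1) that by (metis less_eq_real_def)
    then show False using feas(2) by simp
  qed
  define h where "h = a$i0/z$i0 - lam/(\<delta>+z$i0)"
  have hk: "h * z$k = a$k - lam*z$k/(\<delta>+z$k)" for k
  proof (cases "z$k > 0")
    case True
    have "h = a$k/z$k - lam/(\<delta>+z$k)" unfolding h_def by (rule kkt[OF min dpos i0 True])
    then have "h * z$k = (a$k/z$k)*z$k - lam/(\<delta>+z$k)*z$k" by (simp add: left_diff_distrib)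
    then show ?thesis using True by simp
  next
    case False
    then have "z$k = 0" using feas(1) by (metis less_eq_real_def)
    moreover then have "a$k = 0" using feas(3) a0 unfolding finite_obj_def
      by (metis less_irrefl less_eq_real_def)
    ultimately show ?thesis by simp
  qed
  have "h = h * (\<Sum>k\<in>UNIV. z $ k)" using feas(2) by simp
  also have "\<dots> = (\<Sum>k\<in>UNIV. a$k - lam*z$k/(\<delta>+z$k))" by (simp add: sum_distrib_left hk)
  also have "\<dots> = 1 - lam * (\<Sum>k\<in>UNIV. z$k/(\<delta>+z$k))"
    by (simp add: sum_subtractf sa sum_distrib_left)
  finally have hH: "h = 1 - lam * (\<Sum>k\<in>UNIV. z$k/(\<delta>+z$k))" .
  show "\<forall>k. (1 - lam * (\<Sum>k\<in>UNIV. z$k/(\<delta>+z$k))) * z$k = a$k - lam*z$k/(\<delta>+z$k)"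
    using hk hH by simp
  have b1: "z$k/(\<delta>+z$k) \<le> 1" and b0: "0 \<le> z$k/(\<delta>+z$k)" for k
    using feas(1)[rule_format, of k] dpos by (auto simp: divide_le_eq_1)
  have "(\<Sum>k\<in>UNIV. z$k/(\<delta>+z$k)) \<le> real CARD('k) * 1"
    by (rule sum_bounded_above) (use b1 in auto)
  then show "1 - lam * real CARD('k) \<le> 1 - lam * (\<Sum>k\<in>UNIV. z$k/(\<delta>+z$k))"
    using lp by (simp add: mult_left_mono)
  have "0 \<le> (\<Sum>k\<in>UNIV. z$k/(\<delta>+z$k))" by (rule sum_nonneg) (use b0 in auto)
  then show "1 - lam * (\<Sum>k\<in>UNIV. z$k/(\<delta>+z$k)) \<le> 1" using lp by simp
  show "\<forall>k. z$k \<ge> 0" by (rule feas(1))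
qed

theorem theorem1:
  fixes a :: "real ^ 'k" and lam :: real and z :: "real \<Rightarrow> real ^ 'k"
  assumes "\<forall>k. a $ k \<ge> 0"
    and "(\<Sum>k\<in>UNIV. a $ k) = 1"
    and "0 < lam" and "lam < 1 / real CARD('k)"
    and "\<forall>\<delta>>0. is_minimizer a lam \<delta> (z \<delta>)"
  shows "(z \<longlongrightarrow> (\<chi> k. pos_part (a $ k - lam) / (\<Sum>j\<in>UNIV. pos_part (a $ j - lam)))) (at_right 0)"
proof -
  note a0 = assms(1) and sa = assms(2) and lp = assms(3) and lK = assms(4) and mz = assms(5)
  define c where "c = 1 - lam * real CARD('k)"
  have Kp: "real CARD('k) > 0" by simp
  have "lam * real CARD('k) < 1" using lK Kp by (simp add: field_simps)
  then have cp: "c > 0" by (simp add: c_def)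
  have K1: "real CARD('k) \<ge> 1" using Kp by (simp add: Suc_leI)
  have "lam * 1 \<le> lam * real CARD('k)" using K1 lp by (intro mult_left_mono) auto
  then have lam1: "lam < 1" using \<open>lam * real CARD('k) < 1\<close> by simp
  define Hf where "Hf \<delta> = 1 - lam * (\<Sum>k\<in>UNIV. z \<delta> $k/(\<delta>+z \<delta> $k))" for \<delta>
  define y where "y k \<delta> = Hf \<delta> * z \<delta> $ k" for k \<delta>
  define P where "P = (\<Sum>j\<in>UNIV. pos_part (a $ j - lam))"
  have st: "y k \<delta> = a$k - lam * z \<delta> $k/(\<delta>+z \<delta> $k)" "c \<le> Hf \<delta>" "Hf \<delta> \<le> 1" "z \<delta> $ k \<ge> 0"
    if "\<delta> > 0" for \<delta> k
    using step[OF a0 sa lp mz[rule_format, OF that] that] unfolding y_def Hf_def c_def by auto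
  have ev: "eventually (\<lambda>\<delta>. \<delta> > 0) (at_right (0::real))"
    by (simp add: eventually_at_right_field) (rule exI[of _ 1], auto)
  have ylim: "((\<lambda>\<delta>. y k \<delta>) \<longlongrightarrow> pos_part (a$k - lam)) (at_right 0)" for k
  proof (cases "a$k > lam")
    case True
    let ?e = "a$k - lam"
    have up: "((\<lambda>\<delta>. ?e + lam * \<delta> / ?e) \<longlongrightarrow> ?e + lam * 0 / ?e) (at_right 0)"
      using True by (intro tendsto_intros) auto
    show ?thesis
    proof (rule tendsto_sandwich[of "\<lambda>_. ?e" _ _ "\<lambda>\<delta>. ?e + lam * \<delta> / ?e"])
      show "eventually (\<lambda>\<delta>. ?e \<le> y k \<delta>) (at_right 0)"
        using ev
      proof (rule eventually_mono)
        fix \<delta> :: real assume d: "\<delta> > 0"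
        have "y k \<delta> = ?e + lam * \<delta> / (\<delta> + z \<delta> $ k)"
          using st(1)[OF d, of k] st(4)[OF d, of k] d by (simp add: field_simps)
        moreover have "0 \<le> lam * \<delta> / (\<delta> + z \<delta> $ k)" using lp d st(4)[OF d, of k] by simp
        ultimately show "?e \<le> y k \<delta>" by simp
      qed
      show "eventually (\<lambda>\<delta>. y k \<delta> \<le> ?e + lam * \<delta> / ?e) (at_right 0)"
        using ev
      proof (rule eventually_mono)
        fix \<delta> :: real assume d: "\<delta> > 0"
        have yd: "y k \<delta> = ?e + lam * \<delta> / (\<delta> + z \<delta> $ k)"
          using st(1)[OF d, of k] st(4)[OF d, of k] d by (simp add: field_simps)
        have "0 \<le> lam * \<delta> / (\<delta> + z \<delta> $ k)" using lp d st(4)[OF d, of k] by simp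
        then have "?e \<le> y k \<delta>" using yd by simp
        moreover have "y k \<delta> \<le> z \<delta> $ k" unfolding y_def
          using mult_right_mono[OF st(3)[OF d] st(4)[OF d, of k]] by simp
        ultimately have "?e \<le> \<delta> + z \<delta> $ k" using d by simp
        then have "lam * \<delta> / (\<delta> + z \<delta> $ k) \<le> lam * \<delta> / ?e"
          using True lp d by (intro divide_left_mono) auto
        then show "y k \<delta> \<le> ?e + lam * \<delta> / ?e" using yd by simp
      qed
    qed (use up True in \<open>auto simp: pos_part_def\<close>)
  next
    case False
    have up: "((\<lambda>\<delta>. sqrt \<delta>) \<longlongrightarrow> sqrt 0) (at_right 0)"
      by (intro tendsto_intros)
    show ?thesis
    proof (rule tendsto_sandwich[of "\<lambda>_. 0" _ _ "\<lambda>\<delta>. sqrt \<delta>"])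
      show "eventually (\<lambda>\<delta>. 0 \<le> y k \<delta>) (at_right 0)"
        using ev
      proof (rule eventually_mono)
        fix \<delta> :: real assume d: "\<delta> > 0"
        show "0 \<le> y k \<delta>" unfolding y_def using st(2)[OF d] st(4)[OF d, of k] cp by simp
      qed
      show "eventually (\<lambda>\<delta>. y k \<delta> \<le> sqrt \<delta>) (at_right 0)"
        using ev
      proof (rule eventually_mono)
        fix \<delta> :: real assume d: "\<delta> > 0"
        have zk: "z \<delta> $ k \<ge> 0" by (rule st(4)[OF d])
        have y0: "0 \<le> y k \<delta>" unfolding y_def using st(2)[OF d] zk cp by simp
        have yd: "y k \<delta> = (a$k - lam) + lam * \<delta> / (\<delta> + z \<delta> $ k)"
          using st(1)[OF d, of k] zk d by (simp add: field_simps)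
        then have y1: "y k \<delta> \<le> lam * \<delta> / (\<delta> + z \<delta> $ k)" using False by simp
        have y2: "y k \<delta> \<le> z \<delta> $ k" unfolding y_def
          using mult_right_mono[OF st(3)[OF d] zk] by simp
        have "y k \<delta> * (\<delta> + z \<delta> $ k) \<le> lam * \<delta>"
          using y1 d zk by (simp add: le_divide_eq)
        moreover have "y k \<delta> * y k \<delta> \<le> y k \<delta> * (\<delta> + z \<delta> $ k)"
          using y0 y2 d by (intro mult_left_mono) auto
        moreover have "lam * \<delta> \<le> \<delta>" using lam1 d by simp
        ultimately have "(y k \<delta>)\<^sup>2 \<le> \<delta>" by (simp add: power2_eq_square)
        then show "y k \<delta> \<le> sqrt \<delta>" by (simp add: real_le_rsqrt)
      qed
    qed (use up False in \<open>auto simp: pos_part_def\<close>)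
  qed
  have Hsum: "eventually (\<lambda>\<delta>. Hf \<delta> = (\<Sum>k\<in>UNIV. y k \<delta>)) (at_right 0)"
    using ev
  proof (rule eventually_mono)
    fix \<delta> :: real assume d: "\<delta> > 0"
    have "(\<Sum>k\<in>UNIV. z \<delta> $ k) = 1"
      using mz d unfolding is_minimizer_def simplex_feasible_def by auto
    then show "Hf \<delta> = (\<Sum>k\<in>UNIV. y k \<delta>)" unfolding y_def by (simp add: sum_distrib_left[symmetric])
  qed
  have Hlim: "(Hf \<longlongrightarrow> P) (at_right 0)"
  proof -
    have "((\<lambda>\<delta>. \<Sum>k\<in>UNIV. y k \<delta>) \<longlongrightarrow> P) (at_right 0)"
      unfolding P_def by (intro tendsto_sum ylim)
    then show ?thesis using Hsum tendsto_cong by (smt (verit) eventually_mono)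
  qed
  obtain k0 where k0: "a$k0 > lam"
  proof (rule ccontr)
    assume "\<not> thesis"
    then have "\<forall>k. a$k \<le> lam" using that by (metis not_le)
    then have "(\<Sum>k\<in>UNIV. a $ k) \<le> real CARD('k) * lam"
      by (intro sum_bounded_above) auto
    then show False using sa \<open>lam * real CARD('k) < 1\<close> by (simp add: mult.commute)
  qed
  have "pos_part (a$k0 - lam) \<le> P" unfolding P_def
    by (rule member_le_sum) (auto simp: pos_part_def)
  then have Pp: "P > 0" using k0 by (simp add: pos_part_def)
  show ?thesis
  proof (rule vec_tendstoI)
    fix k
    have "((\<lambda>\<delta>. y k \<delta> / Hf \<delta>) \<longlongrightarrow> pos_part (a$k - lam) / P) (at_right 0)"
      using Pp by (intro tendsto_divide ylim Hlim) auto
    moreover have "eventually (\<lambda>\<delta>. y k \<delta> / Hf \<delta> = z \<delta> $ k) (at_right 0)"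
      using ev
    proof (rule eventually_mono)
      fix \<delta> :: real assume d: "\<delta> > 0"
      have "Hf \<delta> > 0" using st(2)[OF d] cp by simp
      then show "y k \<delta> / Hf \<delta> = z \<delta> $ k" unfolding y_def by simp
    qed
    ultimately have "((\<lambda>\<delta>. z \<delta> $ k) \<longlongrightarrow> pos_part (a$k - lam) / P) (at_right 0)"
      using tendsto_cong by (smt (verit) eventually_mono)
    then show "((\<lambda>\<delta>. z \<delta> $ k) \<longlongrightarrow> (\<chi> k. pos_part (a $ k - lam) / (\<Sum>j\<in>UNIV. pos_part (a $ j - lam))) $ k) (at_right 0)"
      unfolding P_def by simp
  qed
qed

end
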